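(* Let $\vec{\mathcal G}=([n],E)$ be a directed graph with $m=|E|$ edges in which every vertex has at least one outgoing edge and which has a single strongly connected component. Let the weights $(r_{ij})$ be independent absolutely continuous random variables with densities $f_{ij}$ satisfying $f_{ij}(y)\le\phi$ for all $(i,j),y$. For $(i,j)\in E$ define $$Y_{ij}(r)=\inf\{x\in\mathbb R:\ \text{some cycle of minimum mean weight in } \vec{\mathcal G} \text{ with weights } (x,r_{-ij}) \text{ does not contain } (i,j)\}$$ (with values in $[-\infty,+\infty]$). Then for every $\alpha>0$, $$\mathbb P\bigl(\exists (i,j)\in E:\ Y_{ij}\le r_{ij}\le Y_{ij}+\alpha\bigr)\le\alpha m\phi .$$
   Context: The mean weight of a directed cycle is the sum of its edge weights divided by its number of edges. $(x,r_{-ij})$ denotes $r$ with coordinate $ij$ replaced by $x$. *)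

theory Defs
  imports "HOL-Probability.Probability"
begin

text \<open>A directed graph on vertex set [n] = {0..<n} is given by its edge set
  E :: (nat \<times> nat) set. Weights are functions w :: nat \<times> nat \<Rightarrow> real
  (only values on E matter).\<close>

definition is_cycle :: "(nat \<times> nat) set \<Rightarrow> nat list \<Rightarrow> bool" where
  "is_cycle E c \<longleftrightarrow> c \<noteq> [] \<and> distinct c \<and>
     (\<forall>i < length c. (c ! i, c ! (Suc i mod length c)) \<in> E)"

definition cycle_edges :: "nat list \<Rightarrow> (nat \<times> nat) set" where
  "cycle_edges c = {(c ! i, c ! (Suc i mod length c)) | i. i < length c}"

definition mean_weight :: "(nat \<times> nat \<Rightarrow> real) \<Rightarrow> nat list \<Rightarrow> real" where
  "mean_weight w c =
     (\<Sum>i<length c. w (c ! i, c ! (Suc i mod length c))) / real (length c)"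

definition is_min_mean_cycle ::
  "(nat \<times> nat) set \<Rightarrow> (nat \<times> nat \<Rightarrow> real) \<Rightarrow> nat list \<Rightarrow> bool" where
  "is_min_mean_cycle E w c \<longleftrightarrow> is_cycle E c \<and>
     (\<forall>c'. is_cycle E c' \<longrightarrow> mean_weight w c \<le> mean_weight w c')"

text \<open>Y_e(r) = inf { x : some minimum mean cycle for weights (x, r_{-e}) avoids e },
  in the extended reals (inf of the empty set is +\<infinity>).\<close>
definition Y_thr :: "(nat \<times> nat) set \<Rightarrow> nat \<times> nat \<Rightarrow> (nat \<times> nat \<Rightarrow> real) \<Rightarrow> ereal" where
  "Y_thr E e r = Inf {ereal x | x. \<exists>c. is_min_mean_cycle E (r(e := x)) c \<and> e \<notin> cycle_edges c}"

end

theory Submission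
  imports Defs
begin

definition extw :: "(nat\<times>nat) set \<Rightarrow> nat\<times>nat \<Rightarrow> (nat\<times>nat \<Rightarrow> real) \<Rightarrow> nat\<times>nat \<Rightarrow> real" where
  "extw E e h = (\<lambda>e'. if e' \<in> E - {e} then h e' else 0)"

definition Pav :: "(nat\<times>nat) set \<Rightarrow> nat\<times>nat \<Rightarrow> (nat\<times>nat \<Rightarrow> real) \<Rightarrow> real \<Rightarrow> bool" where
  "Pav E e w x \<longleftrightarrow> (\<exists>c. is_min_mean_cycle E (w(e := x)) c \<and> e \<notin> cycle_edges c)"

lemma Y_thr_Pav: "Y_thr E e w = Inf {ereal x | x. Pav E e w x}"
  unfolding Y_thr_def Pav_def by simp

lemma mw_cong: "is_cycle E c \<Longrightarrow> (\<forall>d\<in>E. w d = w' d) \<Longrightarrow> mean_weight w c = mean_weight w' c"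
  unfolding mean_weight_def is_cycle_def by (intro arg_cong[where f="\<lambda>s. s / _"] sum.cong) auto

lemma Pav_local:
  assumes "\<forall>d\<in>E-{e}. w d = w' d"
  shows "Pav E e w x = Pav E e w' x"
proof -
  have "\<And>c. is_cycle E c \<Longrightarrow> mean_weight (w(e:=x)) c = mean_weight (w'(e:=x)) c"
    using assms by (intro mw_cong) auto
  then show ?thesis unfolding Pav_def is_min_mean_cycle_def by metis
qed

lemma mw_mono: "x \<le> x' \<Longrightarrow> mean_weight (w(e:=x)) c \<le> mean_weight (w(e:=x')) c"
  unfolding mean_weight_def by (intro divide_right_mono sum_mono) auto

lemma mw_avoid: "e \<notin> cycle_edges c \<Longrightarrow> mean_weight (w(e:=x)) c = mean_weight (w(e:=x')) c"
  unfolding mean_weight_def cycle_edges_def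
  by (intro arg_cong[where f="\<lambda>s. s / _"] sum.cong) auto

lemma Pav_up: "Pav E e w x \<Longrightarrow> x \<le> x' \<Longrightarrow> Pav E e w x'"
  unfolding Pav_def is_min_mean_cycle_def
  by (metis mw_avoid mw_mono order_trans)

lemma Y_less_iff: "Y_thr E e w < a \<longleftrightarrow> (\<exists>q::rat. ereal (of_rat q) < a \<and> Pav E e w (of_rat q))"
proof
  assume "Y_thr E e w < a"
  then have "\<exists>y\<in>{ereal x | x. Pav E e w x}. y < a"
    unfolding Y_thr_Pav by (simp only: Inf_less_iff)
  then obtain x where x: "Pav E e w x" "ereal x < a" by blast
  obtain t where t: "x < t" "ereal t < a"
    using ereal_dense2[OF x(2)] by (metis ereal_less(2) less_ereal.simps(1) order.strict_trans ereal_dense2[OF x(2)])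
  obtain q where q: "q \<in> \<rat>" "x < q" "q < t" using Rats_dense_in_real[OF t(1)] by blast
  from q(1) obtain q' where q': "q = of_rat q'" by (rule Rats_cases) 
  show "\<exists>q::rat. ereal (of_rat q) < a \<and> Pav E e w (of_rat q)"
  proof (intro exI[of _ q'] conjI)
    have "ereal (of_rat q') < ereal t" using q(3) q' by simp
    then show "ereal (of_rat q') < a" using t(2) by (rule order.strict_trans)
    have "x \<le> q" using q(2) by simp
    from Pav_up[OF x(1) this] show "Pav E e w (of_rat q')" using q' by simp
  qed
next
  assume "\<exists>q::rat. ereal (of_rat q) < a \<and> Pav E e w (of_rat q)"
  then obtain q where q: "ereal (of_rat q) < a" "Pav E e w (of_rat q)" by blast
  have "Inf {ereal x | x. Pav E e w x} \<le> ereal (of_rat q)"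
    by (rule Inf_lower) (use q(2) in blast)
  then show "Y_thr E e w < a" unfolding Y_thr_Pav using q(1) by (rule le_less_trans)
qed

lemma extw_meas:
  "(\<lambda>h. ((extw E e h)(e:=q)) d) \<in> borel_measurable (PiM (E-{e}) (\<lambda>_. borel))"
proof (cases "d \<in> E - {e}")
  case True
  then show ?thesis unfolding extw_def by (auto intro: measurable_component_singleton)
next
  case False
  then show ?thesis unfolding extw_def by (cases "d = e") simp_all
qed

lemma mw_meas[measurable]:
  "(\<lambda>h. mean_weight ((extw E e h)(e:=q)) c) \<in> borel_measurable (PiM (E-{e}) (\<lambda>_. borel))"
  unfolding mean_weight_def
  by (rule borel_measurable_divide[OF borel_measurable_sum[OF extw_meas] measurable_const]) simp

lemma pred_constI: "Measurable.pred M (\<lambda>_. P)"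
  by (cases P) (auto simp: pred_def)

lemma mw_le_meas:
  "Measurable.pred (PiM (E-{e}) (\<lambda>_. borel))
     (\<lambda>h. mean_weight ((extw E e h)(e:=q)) c \<le> mean_weight ((extw E e h)(e:=q)) c')"
  by (rule borel_measurable_le[unfolded pred_def[symmetric]]; rule mw_meas)

lemma Pav_meas: "Measurable.pred (PiM (E-{e}) (\<lambda>_. borel)) (\<lambda>h. Pav E e (extw E e h) q)"
  unfolding Pav_def is_min_mean_cycle_def
  apply (rule pred_intros_countable(2))
  apply (rule pred_intros_logic(3)[OF _ pred_constI])
  apply (rule pred_intros_logic(3)[OF pred_constI])
  apply (rule pred_intros_countable(1))
  apply (rule pred_intros_logic(4)[OF pred_constI mw_le_meas])
  done

lemma G_meas: "(\<lambda>h. Y_thr E e (extw E e h)) \<in> borel_measurable (PiM (E-{e}) (\<lambda>_. borel))"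
  unfolding borel_measurable_ereal_iff_Iio
proof
  fix a :: ereal
  have "(\<lambda>h. Y_thr E e (extw E e h)) -` {..<a} \<inter> space (PiM (E-{e}) (\<lambda>_. borel))
     = {h \<in> space (PiM (E-{e}) (\<lambda>_. borel)). \<exists>q::rat. ereal (of_rat q) < a \<and> Pav E e (extw E e h) (of_rat q)}"
    by (auto simp: Y_less_iff)
  also have "\<dots> \<in> sets (PiM (E-{e}) (\<lambda>_. borel))"
    using Pav_meas[of E e] by measurable
  finally show "(\<lambda>h. Y_thr E e (extw E e h)) -` {..<a} \<inter> space (PiM (E-{e}) (\<lambda>_. borel)) \<in> sets (PiM (E-{e}) (\<lambda>_. borel))" .
qed


lemma interval_bound:
  assumes dist: "distributed M lborel Z g" and gb: "\<forall>y. g y \<le> ennreal \<phi>" and "\<alpha> > 0"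
  shows "emeasure (distr M borel Z) {z. y \<le> ereal z \<and> ereal z \<le> y + ereal \<alpha>} \<le> ennreal \<phi> * ennreal \<alpha>"
proof -
  have dZ: "distr M borel Z = density lborel g"
    using distributed_distr_eq_density[OF dist] by (metis distr_cong sets_lborel)
  have gm: "g \<in> borel_measurable lborel" using distributed_borel_measurable[OF dist] .
  show ?thesis
  proof (cases y)
    case (real t)
    have S: "{z. y \<le> ereal z \<and> ereal z \<le> y + ereal \<alpha>} = {t..t+\<alpha>}" using real by auto
    have "emeasure (density lborel g) {t..t+\<alpha>} = (\<integral>\<^sup>+ z. g z * indicator {t..t+\<alpha>} z \<partial>lborel)"
      using gm by (intro emeasure_density) auto
    also have "\<dots> \<le> (\<integral>\<^sup>+ z. ennreal \<phi> * indicator {t..t+\<alpha>} z \<partial>lborel)"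
      using gb by (intro nn_integral_mono mult_right_mono) auto
    also have "\<dots> = ennreal \<phi> * emeasure lborel {t..t+\<alpha>}"
      by (intro nn_integral_cmult_indicator) auto
    also have "\<dots> = ennreal \<phi> * ennreal \<alpha>" using assms(3) by simp
    finally show ?thesis using S dZ by simp
  next
    case PInf
    then show ?thesis by simp
  next
    case MInf
    then show ?thesis by simp
  qed
qed

lemma core:
  assumes P: "prob_space M" and ind: "prob_space.indep_var M N X N' Z'"
    and pm: "p \<in> borel_measurable N'" and pZ: "\<forall>\<omega>\<in>space M. p (Z' \<omega>) = Z \<omega>"
    and dist: "distributed M lborel Z g" and gb: "\<forall>y. g y \<le> ennreal \<phi>"
    and G: "G \<in> borel_measurable N" and alpha: "\<alpha> > 0"
  shows "emeasure M {\<omega>\<in>space M. G (X \<omega>) \<le> ereal (Z \<omega>) \<and> ereal (Z \<omega>) \<le> G (X \<omega>) + ereal \<alpha>}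
           \<le> ennreal \<phi> * ennreal \<alpha>"
proof -
  interpret prob_space M by fact
  have rv: "random_variable N X" "random_variable N' Z'"
    and eq: "distr M N X \<Otimes>\<^sub>M distr M N' Z' = distr M (N \<Otimes>\<^sub>M N') (\<lambda>x. (X x, Z' x))"
    using ind unfolding indep_var_distribution_eq by auto
  define A where "A = {q\<in>space (N \<Otimes>\<^sub>M N'). G (fst q) \<le> ereal (p (snd q)) \<and> ereal (p (snd q)) \<le> G (fst q) + ereal \<alpha>}"
  have A: "A \<in> sets (N \<Otimes>\<^sub>M N')" unfolding A_def using G pm by measurable
  have XZ: "(\<lambda>x. (X x, Z' x)) \<in> measurable M (N \<Otimes>\<^sub>M N')" using rv by measurable
  have "{\<omega>\<in>space M. G (X \<omega>) \<le> ereal (Z \<omega>) \<and> ereal (Z \<omega>) \<le> G (X \<omega>) + ereal \<alpha>}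
      = (\<lambda>x. (X x, Z' x)) -` A \<inter> space M"
    using measurable_space[OF rv(1)] measurable_space[OF rv(2)] pZ by (auto simp: A_def space_pair_measure)
  then have "emeasure M {\<omega>\<in>space M. G (X \<omega>) \<le> ereal (Z \<omega>) \<and> ereal (Z \<omega>) \<le> G (X \<omega>) + ereal \<alpha>}
      = emeasure (distr M (N \<Otimes>\<^sub>M N') (\<lambda>x. (X x, Z' x))) A"
    using emeasure_distr[OF XZ A] by simp
  also have "\<dots> = emeasure (distr M N X \<Otimes>\<^sub>M distr M N' Z') A" by (simp add: eq)
  also have "\<dots> = (\<integral>\<^sup>+ x. emeasure (distr M N' Z') (Pair x -` A) \<partial>distr M N X)"
  proof -
    interpret Z: prob_space "distr M N' Z'" by (rule prob_space_distr) (rule rv)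
    have "A \<in> sets (distr M N X \<Otimes>\<^sub>M distr M N' Z')" using A
      by (metis sets_distr sets_pair_measure_cong)
    then show ?thesis by (rule Z.emeasure_pair_measure_alt)
  qed
  also have "\<dots> \<le> (\<integral>\<^sup>+ x. ennreal \<phi> * ennreal \<alpha> \<partial>distr M N X)"
  proof (intro nn_integral_mono)
    fix x assume "x \<in> space (distr M N X)"
    then have PA: "Pair x -` A = p -` {z. G x \<le> ereal z \<and> ereal z \<le> G x + ereal \<alpha>} \<inter> space (distr M N' Z')"
      by (auto simp: A_def space_pair_measure)
    have "emeasure (distr M N' Z') (Pair x -` A) = emeasure (distr (distr M N' Z') borel p) {z. G x \<le> ereal z \<and> ereal z \<le> G x + ereal \<alpha>}"
      unfolding PA using pm by (intro emeasure_distr[symmetric]) auto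
    also have "distr (distr M N' Z') borel p = distr M borel (p \<circ> Z')"
      using pm rv(2) by (intro distr_distr) auto
    also have "\<dots> = distr M borel Z" using pZ by (intro distr_cong) auto
    finally show "emeasure (distr M N' Z') (Pair x -` A) \<le> ennreal \<phi> * ennreal \<alpha>"
      using interval_bound[OF dist gb alpha] by simp
  qed
  also have "\<dots> = ennreal \<phi> * ennreal \<alpha>"
  proof -
    interpret X: prob_space "distr M N X" by (rule prob_space_distr) (rule rv)
    show ?thesis using X.emeasure_space_1 by simp
  qed
  finally show ?thesis .
qed


lemma phi_nonneg:
  assumes P: "prob_space M" and dist: "distributed M lborel Z g" and gb: "\<forall>y. g y \<le> ennreal \<phi>"
  shows "\<phi> \<ge> 0"
proof (rule ccontr)
  assume "\<not> \<phi> \<ge> 0"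
  then have g0: "\<And>y. g y = 0" using gb by (metis ennreal_eq_0_iff le_zero_eq linorder_not_le order_less_imp_le)
  interpret prob_space M by fact
  have Zm: "Z \<in> measurable M lborel" using distributed_measurable[OF dist] .
  have "emeasure (distr M lborel Z) UNIV = emeasure M (space M)"
    using emeasure_distr[OF Zm, of UNIV] by simp
  also have "\<dots> = 1" by (rule emeasure_space_1)
  finally have 1: "emeasure (distr M lborel Z) UNIV = 1" .
  have "emeasure (density lborel g) UNIV = (\<integral>\<^sup>+ z. g z * indicator UNIV z \<partial>lborel)"
    using distributed_borel_measurable[OF dist] by (intro emeasure_density) auto
  also have "\<dots> = 0" by (simp add: g0)
  finally show False using 1 distributed_distr_eq_density[OF dist] by simp
qed

theorem mainTheorem5:
  fixes n :: nat and E :: "(nat \<times> nat) set"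
    and M :: "'a measure" and r :: "nat \<times> nat \<Rightarrow> 'a \<Rightarrow> real"
    and f :: "nat \<times> nat \<Rightarrow> real \<Rightarrow> ennreal" and \<phi> :: real and \<alpha> :: real
  assumes E_sub: "E \<subseteq> {..<n} \<times> {..<n}"
    and out_edge: "\<forall>i<n. \<exists>j. (i, j) \<in> E"
    and strongly_conn: "\<forall>i<n. \<forall>j<n. (i, j) \<in> E\<^sup>*"
    and M: "prob_space M"
    and indep: "prob_space.indep_vars M (\<lambda>_. borel) r E"
    and dens: "\<forall>e\<in>E. distributed M lborel (r e) (f e)"
    and dens_bound: "\<forall>e\<in>E. \<forall>y. f e y \<le> ennreal \<phi>"
    and alpha_pos: "\<alpha> > 0"
  shows "measure M {\<omega> \<in> space M. \<exists>e\<in>E.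
            Y_thr E e (\<lambda>e'. r e' \<omega>) \<le> ereal (r e \<omega>) \<and>
            ereal (r e \<omega>) \<le> Y_thr E e (\<lambda>e'. r e' \<omega>) + ereal \<alpha>}
         \<le> \<alpha> * real (card E) * \<phi>"
proof (cases "E = {}")
  case True
  then show ?thesis by simp
next
  case False
  interpret prob_space M by fact
  have finE: "finite E" using E_sub by (rule finite_subset) auto
  from False obtain e0 where "e0 \<in> E" by auto
  then have phi0: "\<phi> \<ge> 0" using phi_nonneg[OF M] dens dens_bound by blast
  define S where "S e = {\<omega> \<in> space M. Y_thr E e (\<lambda>e'. r e' \<omega>) \<le> ereal (r e \<omega>) \<and>
            ereal (r e \<omega>) \<le> Y_thr E e (\<lambda>e'. r e' \<omega>) + ereal \<alpha>}" for e
  have key: "S e \<in> sets M \<and> measure M (S e) \<le> \<alpha> * \<phi>" if e: "e \<in> E" for e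
  proof -
    define X where "X \<omega> = restrict (\<lambda>i. r i \<omega>) (E - {e})" for \<omega>
    define G where "G h = Y_thr E e (extw E e h)" for h
    have ind2: "indep_var (PiM (E-{e}) (\<lambda>_. borel)) X (PiM {e} (\<lambda>_. borel)) (\<lambda>\<omega>. restrict (\<lambda>i. r i \<omega>) {e})"
      unfolding X_def using e by (intro indep_var_restrict[OF indep]) auto
    have rvX: "random_variable (PiM (E-{e}) (\<lambda>_. borel)) X"
      using ind2 unfolding indep_var_distribution_eq by auto
    have rvZ: "random_variable borel (r e)"
      using indep e unfolding indep_vars_def by auto
    have Gm: "G \<in> borel_measurable (PiM (E-{e}) (\<lambda>_. borel))" unfolding G_def by (rule G_meas)
    have GX: "G (X \<omega>) = Y_thr E e (\<lambda>e'. r e' \<omega>)" for \<omega>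
    proof -
      have "\<forall>d\<in>E-{e}. extw E e (X \<omega>) d = r d \<omega>" by (auto simp: extw_def X_def)
      then have "Pav E e (extw E e (X \<omega>)) x = Pav E e (\<lambda>e'. r e' \<omega>) x" for x by (rule Pav_local)
      then show ?thesis unfolding G_def Y_thr_Pav by simp
    qed
    have SX: "S e = {\<omega>\<in>space M. G (X \<omega>) \<le> ereal (r e \<omega>) \<and> ereal (r e \<omega>) \<le> G (X \<omega>) + ereal \<alpha>}"
      unfolding S_def GX ..
    have Ssets: "S e \<in> sets M" unfolding SX using Gm rvX rvZ by measurable
    have "emeasure M (S e) \<le> ennreal \<phi> * ennreal \<alpha>"
      unfolding SX using core[OF M ind2 _ _ _ _ Gm alpha_pos, of "\<lambda>z. z e"] dens dens_bound e measurable_component_singleton[of e "{e}" "\<lambda>_. borel"] by auto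
    also have "\<dots> = ennreal (\<alpha> * \<phi>)" using phi0 alpha_pos by (simp add: ennreal_mult' mult.commute)
    finally have "measure M (S e) \<le> \<alpha> * \<phi>"
      using phi0 alpha_pos by (simp add: emeasure_eq_measure ennreal_le_iff)
    with Ssets show ?thesis by simp
  qed
  have "{\<omega> \<in> space M. \<exists>e\<in>E.
            Y_thr E e (\<lambda>e'. r e' \<omega>) \<le> ereal (r e \<omega>) \<and>
            ereal (r e \<omega>) \<le> Y_thr E e (\<lambda>e'. r e' \<omega>) + ereal \<alpha>} = (\<Union>e\<in>E. S e)"
    unfolding S_def by auto
  also have "measure M \<dots> \<le> (\<Sum>e\<in>E. measure M (S e))"
    using key finE by (intro measure_UNION_le) auto
  also have "\<dots> \<le> (\<Sum>e\<in>E. \<alpha> * \<phi>)" using key by (intro sum_mono) auto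
  also have "\<dots> = \<alpha> * real (card E) * \<phi>" by simp
  finally show ?thesis .
qed

end
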